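(* Let $(\bm n;\bm m)\in\mathfrak C_{2r}$ with $\bm n\neq-\bm m$. Then each of the following four statements is equivalent to $\det T_{\bm n;\bm m}\neq 0$: (i) there exists a unique Laurent polynomial $\Phi(z)=z^{|\bm n|}+\dots+\alpha z^{-|\bm m|}$ (i.e. $\Phi\in\operatorname{span}\{z^k\}_{k=-|\bm m|}^{|\bm n|}$ with $z^{|\bm n|}$-coefficient $1$) such that $L_j[\Phi(w)w^{-k}]=0$ for all $-m_j\le k\le n_j-1$ and $1\le j\le r$; (ii) there exists a unique Laurent polynomial $\Phi^*(z)=\beta z^{|\bm n|}+\dots+z^{-|\bm m|}$ (i.e. $\Phi^*\in\operatorname{span}\{z^k\}_{k=-|\bm m|}^{|\bm n|}$ with $z^{-|\bm m|}$-coefficient $1$) such that $L_j[\Phi^*(w)w^{-k}]=0$ for all $-m_j+1\le k\le n_j$ and $1\le j\le r$; (iii) there exists a unique vector $(\Xi_1,\dots,\Xi_r)$ of Laurent polynomials with $\Xi_j\in\operatorname{span}\{z^k\}_{k=-n_j}^{m_j-1}$ such that $\sum_{j=1}^r L_j[\Xi_j(w)w^{-k}]=0$ for $-|\bm n|+1\le k\le |\bm m|-1$ and $\sum_{j=1}^r L_j[\Xi_j(w)w^{|\bm n|}]=1$; (iv) there exists a unique vector $(\Xi^*_1,\dots,\Xi^*_r)$ of Laurent polynomials with $\Xi^*_j\in\operatorname{span}\{z^k\}_{k=-n_j+1}^{m_j}$ such that $\sum_{j=1}^r L_j[\Xi^*_j(w)w^{-k}]=0$ for $-|\bm n|+1\le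 k\le |\bm m|-1$ and $\sum_{j=1}^r L_j[\Xi^*_j(w)w^{-|\bm m|}]=1$.
   Context: Fix $r\ge1$. For $\bm v=(v_1,\dots,v_r)\in\mathbb Z^r$, $|\bm v|:=v_1+\dots+v_r$ (signed sum, no absolute values). Let $c_{k,j}\in\mathbb C$ ($k\in\mathbb Z$, $j=1,\dots,r$) be arbitrary complex numbers and let $L_j$ be the linear functional on the space of complex Laurent polynomials in $w$ determined by $L_j[w^{-k}]=c_{k,j}$ for all $k\in\mathbb Z$. Let $\mathfrak C_{2r}=\{(\bm n;\bm m)\in\mathbb Z^r\times\mathbb Z^r: n_j+m_j\ge 0 \text{ for all } j\}$. For $(\bm n;\bm m)\in\mathfrak C_{2r}$ with $\bm n\ne-\bm m$, $T_{\bm n;\bm m}$ denotes the $(|\bm n|+|\bm m|)\times(|\bm n|+|\bm m|)$ matrix whose rows are indexed by the pairs $(j,k)$ with $1\le j\le r$, $-m_j\le k\le n_j-1$ (ordered first by $j$, then by increasing $k$; a block is empty if $n_j=-m_j$), whose columns are indexed by $i=-|\bm m|,\dots,|\bm n|-1$ in increasing order, and whose $((j,k),i)$ entry is $c_{k-i,j}$. *)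

theory Defs
  imports Complex_Main "Jordan_Normal_Form.Determinant"
begin

definition vsum :: "nat \<Rightarrow> (nat \<Rightarrow> int) \<Rightarrow> int" where
  "vsum r v = (\<Sum>j=1..r. v j)"

(* Laurent polynomials in w are represented by their coefficient functions
   P :: int \<Rightarrow> complex  (P i = coefficient of w^i). *)
definition lp_span :: "int \<Rightarrow> int \<Rightarrow> (int \<Rightarrow> complex) set" where
  "lp_span a b = {P. \<forall>i. P i \<noteq> 0 \<longrightarrow> a \<le> i \<and> i \<le> b}"

definition mono_mult :: "(int \<Rightarrow> complex) \<Rightarrow> int \<Rightarrow> (int \<Rightarrow> complex)" where
  "mono_mult P e = (\<lambda>i. P (i - e))"

(* L_j, the linear functional with L_j[w^{-k}] = c k j, applied to a Laurent polynomial *)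
definition Lfun :: "(int \<Rightarrow> nat \<Rightarrow> complex) \<Rightarrow> nat \<Rightarrow> (int \<Rightarrow> complex) \<Rightarrow> complex" where
  "Lfun c j P = (\<Sum>i\<in>{i. P i \<noteq> 0}. P i * c (- i) j)"

definition row_offset :: "(nat \<Rightarrow> int) \<Rightarrow> (nat \<Rightarrow> int) \<Rightarrow> nat \<Rightarrow> int" where
  "row_offset n m j = (\<Sum>l=1..<j. n l + m l)"

(* the pair (j,k) labelling the p-th row (0-based), rows ordered by j, then increasing k *)
definition row_label :: "nat \<Rightarrow> (nat \<Rightarrow> int) \<Rightarrow> (nat \<Rightarrow> int) \<Rightarrow> nat \<Rightarrow> nat \<times> int" where
  "row_label r n m p = (THE (j,k). 1 \<le> j \<and> j \<le> r \<and> - m j \<le> k \<and> k \<le> n j - 1 \<and>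
                        row_offset n m j + (k + m j) = int p)"

(* T_{n;m}: row p <-> (j,k), column q <-> i = q - |m|, entry c_{k-i,j} *)
definition Tmat :: "nat \<Rightarrow> (int \<Rightarrow> nat \<Rightarrow> complex) \<Rightarrow> (nat \<Rightarrow> int) \<Rightarrow> (nat \<Rightarrow> int) \<Rightarrow> complex mat" where
  "Tmat r c n m = (let N = nat (vsum r n + vsum r m) in
     mat N N (\<lambda>(p,q). case row_label r n m p of (j,k) \<Rightarrow> c (k - (int q - vsum r m)) j))"

end

theory Submission
  imports Defs
begin

lemma smult_inv_one: "(d::complex) \<noteq> 0 \<Longrightarrow> (1/d) \<cdot>\<^sub>m (d \<cdot>\<^sub>m 1\<^sub>m N) = 1\<^sub>m N"
  by (rule eq_matI) auto

lemma det_unique_sol: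
  fixes A :: "complex mat"
  assumes A: "A \<in> carrier_mat N N" and b: "b \<in> carrier_vec N"
  shows "det A \<noteq> 0 \<longleftrightarrow> (\<exists>!x. x \<in> carrier_vec N \<and> A *\<^sub>v x = b)"
proof
  assume d: "det A \<noteq> 0"
  define B where "B = (1 / det A) \<cdot>\<^sub>m adj_mat A"
  have B: "B \<in> carrier_mat N N" using adj_mat(1)[OF A] by (simp add: B_def)
  have AB: "A * B = 1\<^sub>m N"
    using adj_mat[OF A] d A unfolding B_def by (simp add: mult_smult_distrib smult_inv_one)
  have BA: "B * A = 1\<^sub>m N"
    using adj_mat[OF A] d A unfolding B_def by (simp add: mult_smult_assoc_mat smult_inv_one)
  show "\<exists>!x. x \<in> carrier_vec N \<and> A *\<^sub>v x = b"
  proof (rule ex1I[of _ "B *\<^sub>v b"])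
    show "B *\<^sub>v b \<in> carrier_vec N \<and> A *\<^sub>v (B *\<^sub>v b) = b"
      using A B b AB by (simp add: assoc_mult_mat_vec[symmetric])
  next
    fix x assume x: "x \<in> carrier_vec N \<and> A *\<^sub>v x = b"
    have "x = (B * A) *\<^sub>v x" using BA x by simp
    also have "\<dots> = B *\<^sub>v (A *\<^sub>v x)" using A B x by (simp add: assoc_mult_mat_vec)
    finally show "x = B *\<^sub>v b" using x by simp
  qed
next
  assume u: "\<exists>!x. x \<in> carrier_vec N \<and> A *\<^sub>v x = b"
  show "det A \<noteq> 0"
  proof
    assume "det A = 0"
    then obtain v where v: "v \<in> carrier_vec N" "v \<noteq> 0\<^sub>v N" "A *\<^sub>v v = 0\<^sub>v N"
      using det_0_iff_vec_prod_zero[OF A] by auto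
    from u obtain x where x: "x \<in> carrier_vec N" "A *\<^sub>v x = b" by auto
    have "A *\<^sub>v (x + v) = b" using A x v b by (simp add: mult_add_distrib_mat_vec)
    moreover have "x + v \<in> carrier_vec N" using x v by simp
    ultimately have "x + v = x" using u x by blast
    hence "v = 0\<^sub>v N"
    proof -
      assume e: "x + v = x"
      show ?thesis
      proof (rule eq_vecI)
        fix i assume i: "i < dim_vec (0\<^sub>v N)"
        have "(x + v) $ i = x $ i" using e by simp
        thus "v $ i = 0\<^sub>v N $ i" using i x v by simp
      qed (use v in simp)
    qed
    with v show False by simp
  qed
qed

lemma off_Suc: "1 \<le> j \<Longrightarrow> row_offset n m (Suc j) = row_offset n m j + n j + m j"
  by (simp add: row_offset_def)

lemma off_1: "row_offset n m 1 = 0" by (simp add: row_offset_def)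

lemma off_total: "row_offset n m (Suc r) = vsum r n + vsum r m"
  by (simp add: row_offset_def vsum_def sum.distrib atLeastLessThanSuc_atLeastAtMost)

lemma off_mono:
  assumes cone: "\<forall>j\<in>{1..r}. n j + m j \<ge> 0"
  shows "1 \<le> j1 \<Longrightarrow> j1 \<le> j2 \<Longrightarrow> j2 \<le> Suc r \<Longrightarrow> row_offset n m j1 \<le> row_offset n m j2"
proof (induction j2 rule: nat.induct)
  case zero thus ?case by simp
next
  case (Suc t)
  show ?case
  proof (cases "j1 = Suc t")
    case False
    hence "j1 \<le> t" using Suc by simp
    hence "row_offset n m j1 \<le> row_offset n m t" using Suc by simp
    moreover have "row_offset n m (Suc t) = row_offset n m t + n t + m t"
      using \<open>j1 \<le> t\<close> Suc by (intro off_Suc) simp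
    moreover have "n t + m t \<ge> 0" using cone \<open>j1 \<le> t\<close> Suc by auto
    ultimately show ?thesis by simp
  qed simp
qed

lemma off_exists:
  "0 \<le> p \<Longrightarrow> p < row_offset n m (Suc t) \<Longrightarrow>
     \<exists>j\<in>{1..t}. row_offset n m j \<le> p \<and> p < row_offset n m (Suc j)"
proof (induction t)
  case 0 thus ?case by (simp add: row_offset_def)
next
  case (Suc t)
  show ?case
  proof (cases "p < row_offset n m (Suc t)")
    case True with Suc show ?thesis by fastforce
  next
    case False with Suc show ?thesis by (intro bexI[of _ "Suc t"]) auto
  qed
qed

definition Rset :: "nat \<Rightarrow> (nat \<Rightarrow> int) \<Rightarrow> (nat \<Rightarrow> int) \<Rightarrow> (nat \<times> int) set" where
  "Rset r n m = {(j,k). 1 \<le> j \<and> j \<le> r \<and> - m j \<le> k \<and> k \<le> n j - 1}"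

definition row_index :: "(nat \<Rightarrow> int) \<Rightarrow> (nat \<Rightarrow> int) \<Rightarrow> nat \<times> int \<Rightarrow> nat" where
  "row_index n m jk = nat (row_offset n m (fst jk) + snd jk + m (fst jk))"

lemma row_unique:
  assumes cone: "\<forall>j\<in>{1..r}. n j + m j \<ge> 0"
    and a: "1 \<le> j1" "j1 \<le> r" "- m j1 \<le> k1" "k1 \<le> n j1 - 1" "row_offset n m j1 + (k1 + m j1) = p"
    and b: "1 \<le> j2" "j2 \<le> r" "- m j2 \<le> k2" "k2 \<le> n j2 - 1" "row_offset n m j2 + (k2 + m j2) = p"
  shows "j1 = j2 \<and> k1 = k2"
proof -
  have *: False if "1 \<le> j1" "j1 \<le> r" "- m j1 \<le> k1" "k1 \<le> n j1 - 1" "row_offset n m j1 + (k1 + m j1) = p"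
    "1 \<le> j2" "j2 \<le> r" "- m j2 \<le> k2" "k2 \<le> n j2 - 1" "row_offset n m j2 + (k2 + m j2) = p"
    "j1 < j2" for j1 j2 k1 k2
  proof -
    have "row_offset n m (Suc j1) \<le> row_offset n m j2"
      using that by (intro off_mono[OF cone]) auto
    moreover have "row_offset n m (Suc j1) = row_offset n m j1 + n j1 + m j1"
      using that by (intro off_Suc) auto
    ultimately show False using that by linarith
  qed
  have "j1 = j2" using *[OF a b] *[OF b a] by (meson linorder_neqE_nat)
  thus ?thesis using a b by simp
qed

lemma row_label_eq:
  assumes cone: "\<forall>j\<in>{1..r}. n j + m j \<ge> 0"
    and "(j,k) \<in> Rset r n m"
  shows "row_label r n m (row_index n m (j,k)) = (j,k)"
proof -
  have nn: "row_offset n m j \<ge> 0" using off_mono[OF cone, of 1 j] assms(2) off_1[of n m]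
    by (auto simp: Rset_def)
  have e: "int (row_index n m (j,k)) = row_offset n m j + (k + m j)"
    using nn assms(2) by (auto simp: row_index_def Rset_def)
  show ?thesis unfolding row_label_def
  proof (rule the1_equality)
    show "\<exists>!x. (\<lambda>(j', k'). 1 \<le> j' \<and> j' \<le> r \<and> - m j' \<le> k' \<and> k' \<le> n j' - 1 \<and>
                  row_offset n m j' + (k' + m j') = int (row_index n m (j,k))) x"
      apply (rule ex1I[of _ "(j,k)"])
      using assms(2) e apply (simp add: Rset_def)
      using row_unique[OF cone] assms(2) e by (auto simp: Rset_def)
  qed (use assms(2) e in \<open>auto simp: Rset_def\<close>)
qed

lemma row_index_lt:
  assumes cone: "\<forall>j\<in>{1..r}. n j + m j \<ge> 0"
    and "(j,k) \<in> Rset r n m"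
  shows "row_index n m (j,k) < nat (vsum r n + vsum r m)"
proof -
  have nn: "row_offset n m j \<ge> 0" using off_mono[OF cone, of 1 j] assms(2) off_1[of n m]
    by (auto simp: Rset_def)
  have "row_offset n m (Suc j) \<le> row_offset n m (Suc r)"
    using assms(2) by (intro off_mono[OF cone]) (auto simp: Rset_def)
  moreover have "row_offset n m (Suc j) = row_offset n m j + n j + m j"
    using assms(2) by (intro off_Suc) (auto simp: Rset_def)
  ultimately show ?thesis using nn assms(2) off_total[of n m r]
    by (auto simp: row_index_def Rset_def)
qed

lemma row_label_in:
  assumes cone: "\<forall>j\<in>{1..r}. n j + m j \<ge> 0"
    and p: "p < nat (vsum r n + vsum r m)"
  shows "row_label r n m p \<in> Rset r n m \<and> row_index n m (row_label r n m p) = p"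
proof -
  obtain j where j: "j \<in> {1..r}" "row_offset n m j \<le> int p" "int p < row_offset n m (Suc j)"
  proof -
    have "int p < vsum r n + vsum r m" using p by linarith
    then show ?thesis using that off_exists[of "int p" n m r] off_total[of n m r] by auto
  qed
  have s: "row_offset n m (Suc j) = row_offset n m j + n j + m j"
    using j by (intro off_Suc) auto
  define k where "k = int p - row_offset n m j - m j"
  have R: "(j,k) \<in> Rset r n m" using j s by (auto simp: Rset_def k_def)
  have "row_index n m (j,k) = p" by (simp add: row_index_def k_def)
  with row_label_eq[OF cone R] R show ?thesis by simp
qed

lemma row_bij:
  assumes cone: "\<forall>j\<in>{1..r}. n j + m j \<ge> 0"
  shows "bij_betw (row_label r n m) {..<nat (vsum r n + vsum r m)} (Rset r n m)"
proof (rule bij_betw_byWitness[where f' = "row_index n m"])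
  show "\<forall>a\<in>{..<nat (vsum r n + vsum r m)}. row_index n m (row_label r n m a) = a"
    using row_label_in[OF cone] by auto
  show "\<forall>a'\<in>Rset r n m. row_label r n m (row_index n m a') = a'"
    using row_label_eq[OF cone] by auto
  show "row_label r n m ` {..<nat (vsum r n + vsum r m)} \<subseteq> Rset r n m"
    using row_label_in[OF cone] by auto
  show "row_index n m ` Rset r n m \<subseteq> {..<nat (vsum r n + vsum r m)}"
    using row_index_lt[OF cone] by auto
qed

lemma Lfun_span:
  assumes "P \<in> lp_span a b"
  shows "Lfun c j (mono_mult P e) = (\<Sum>l\<in>{a..b}. P l * c (-(l+e)) j)"
proof -
  have s: "{i. mono_mult P e i \<noteq> 0} = (\<lambda>l. l + e) ` {l. P l \<noteq> 0}"
    by (auto simp: mono_mult_def image_iff) (metis diff_add_cancel)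
  have "Lfun c j (mono_mult P e) = (\<Sum>i\<in>(\<lambda>l. l + e) ` {l. P l \<noteq> 0}. P (i - e) * c (-i) j)"
    unfolding Lfun_def s by (simp add: mono_mult_def)
  also have "\<dots> = (\<Sum>l\<in>{l. P l \<noteq> 0}. P l * c (-(l+e)) j)"
    by (subst sum.reindex) (auto simp: inj_on_def)
  also have "\<dots> = (\<Sum>l\<in>{a..b}. P l * c (-(l+e)) j)"
    using assms by (intro sum.mono_neutral_left) (auto simp: lp_span_def)
  finally show ?thesis .
qed

lemma sum_shift_nat_int:
  assumes "L \<ge> 0"
  shows "(\<Sum>q<nat L. g (int q + a)) = (\<Sum>l\<in>{a..<a+L}. g l)"
  by (rule sum.reindex_bij_witness[where i = "\<lambda>l. nat (l - a)" and j = "\<lambda>q. int q + a"])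
     (use assms in auto)

lemma transfer_unique:
  assumes "\<forall>\<Phi>\<in>S. f \<Phi> \<in> carrier_vec N" "\<forall>x\<in>carrier_vec N. \<exists>\<Phi>\<in>S. f \<Phi> = x"
    "inj_on f S" "\<forall>\<Phi>\<in>S. P \<Phi> \<longleftrightarrow> A *\<^sub>v f \<Phi> = b"
  shows "(\<exists>!\<Phi>. \<Phi> \<in> S \<and> P \<Phi>) \<longleftrightarrow> (\<exists>!x. x \<in> carrier_vec N \<and> A *\<^sub>v x = b)"
proof
  assume "\<exists>!\<Phi>. \<Phi> \<in> S \<and> P \<Phi>"
  then obtain \<Phi> where p: "\<Phi> \<in> S" "P \<Phi>" and u: "\<And>\<Psi>. \<Psi> \<in> S \<Longrightarrow> P \<Psi> \<Longrightarrow> \<Psi> = \<Phi>" by blast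
  show "\<exists>!x. x \<in> carrier_vec N \<and> A *\<^sub>v x = b"
  proof (rule ex1I[of _ "f \<Phi>"])
    show "f \<Phi> \<in> carrier_vec N \<and> A *\<^sub>v f \<Phi> = b" using p assms by auto
  next
    fix x assume x: "x \<in> carrier_vec N \<and> A *\<^sub>v x = b"
    then obtain \<Psi> where "\<Psi> \<in> S" "f \<Psi> = x" using assms by blast
    thus "x = f \<Phi>" using u assms x by auto
  qed
next
  assume "\<exists>!x. x \<in> carrier_vec N \<and> A *\<^sub>v x = b"
  then obtain x where p: "x \<in> carrier_vec N" "A *\<^sub>v x = b" and u: "\<And>y. y \<in> carrier_vec N \<Longrightarrow> A *\<^sub>v y = b \<Longrightarrow> y = x" by blast
  obtain \<Phi> where \<Phi>: "\<Phi> \<in> S" "f \<Phi> = x" using assms p by blast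
  show "\<exists>!\<Phi>. \<Phi> \<in> S \<and> P \<Phi>"
  proof (rule ex1I[of _ \<Phi>])
    show "\<Phi> \<in> S \<and> P \<Phi>" using \<Phi> p assms by auto
  next
    fix \<Psi> assume "\<Psi> \<in> S \<and> P \<Psi>"
    hence "f \<Psi> = f \<Phi>" using u assms \<Phi> by auto
    thus "\<Psi> = \<Phi>" using assms(3) \<Phi> \<open>\<Psi> \<in> S \<and> P \<Psi>\<close> by (auto dest: inj_onD)
  qed
qed

lemma mult_vec_entry:
  assumes "A \<in> carrier_mat N N" "v \<in> carrier_vec N" "p < N"
  shows "(A *\<^sub>v v) $ p = (\<Sum>q<N. A $$ (p,q) * v $ q)"
  using assms by (auto simp: scalar_prod_def atLeast0LessThan intro!: sum.cong)

lemma Tmat_carrier: "Tmat r c n m \<in> carrier_mat (nat (vsum r n + vsum r m)) (nat (vsum r n + vsum r m))"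
  by (simp add: Tmat_def Let_def)

lemma Tmat_entry: "p < nat (vsum r n + vsum r m) \<Longrightarrow> q < nat (vsum r n + vsum r m) \<Longrightarrow>
   Tmat r c n m $$ (p,q) = (case row_label r n m p of (j,k) \<Rightarrow> c (k - (int q - vsum r m)) j)"
  by (simp add: Tmat_def Let_def)

lemma N_nonneg:
  assumes cone: "\<forall>j\<in>{1..r}. n j + m j \<ge> 0"
  shows "vsum r n + vsum r m \<ge> 0"
  using off_mono[OF cone, of 1 "Suc r"] off_1[of n m] off_total[of n m r] by simp

lemma all_rows:
  assumes cone: "\<forall>j\<in>{1..r}. n j + m j \<ge> 0"
  shows "(\<forall>p<nat (vsum r n + vsum r m). F (row_label r n m p)) \<longleftrightarrow> (\<forall>jk\<in>Rset r n m. F jk)"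
  using row_label_in[OF cone] row_label_eq[OF cone] row_index_lt[OF cone]
  by (metis lessThan_iff prod.collapse row_bij[OF cone] bij_betw_iff_bijections)

lemma case_i:
  assumes cone: "\<forall>j\<in>{1..r}. n j + m j \<ge> 0"
  shows "det (Tmat r c n m) \<noteq> 0 \<longleftrightarrow>
      (\<exists>!\<Phi>. \<Phi> \<in> lp_span (- vsum r m) (vsum r n) \<and> \<Phi> (vsum r n) = 1 \<and>
         (\<forall>j\<in>{1..r}. \<forall>k. - m j \<le> k \<and> k \<le> n j - 1 \<longrightarrow> Lfun c j (mono_mult \<Phi> (- k)) = 0))"
proof -
  define Nn where "Nn = vsum r n"
  define M where "M = vsum r m"
  define N where "N = nat (Nn + M)"
  define T where "T = Tmat r c n m"
  have NM: "Nn + M \<ge> 0" using N_nonneg[OF cone] by (simp add: Nn_def M_def)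
  have T: "T \<in> carrier_mat N N" using Tmat_carrier by (simp add: T_def N_def Nn_def M_def)
  define S where "S = {\<Phi>. \<Phi> \<in> lp_span (- M) Nn \<and> \<Phi> Nn = 1}"
  define P where "P = (\<lambda>\<Phi>. \<forall>j\<in>{1..r}. \<forall>k. - m j \<le> k \<and> k \<le> n j - 1 \<longrightarrow> Lfun c j (mono_mult \<Phi> (- k)) = 0)"
  define f where "f = (\<lambda>\<Phi>::int\<Rightarrow>complex. vec N (\<lambda>q. \<Phi> (int q - M)))"
  define b where "b = vec N (\<lambda>p. case row_label r n m p of (j,k) \<Rightarrow> - c (k - Nn) j)"
  have b: "b \<in> carrier_vec N" by (simp add: b_def)
  have f1: "\<forall>\<Phi>\<in>S. f \<Phi> \<in> carrier_vec N" by (simp add: f_def)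
  have f2: "\<forall>x\<in>carrier_vec N. \<exists>\<Phi>\<in>S. f \<Phi> = x"
  proof
    fix x :: "complex vec" assume x: "x \<in> carrier_vec N"
    define \<Phi> where "\<Phi> = (\<lambda>l. if l = Nn then 1 else if - M \<le> l \<and> l < Nn then x $ nat (l + M) else (0::complex))"
    have "\<Phi> \<in> S" unfolding S_def lp_span_def \<Phi>_def using NM by auto
    moreover have "f \<Phi> = x"
      using x by (intro eq_vecI) (auto simp: f_def \<Phi>_def N_def)
    ultimately show "\<exists>\<Phi>\<in>S. f \<Phi> = x" by blast
  qed
  have f3: "inj_on f S"
  proof (rule inj_onI)
    fix \<Phi> \<Psi> assume a: "\<Phi> \<in> S" "\<Psi> \<in> S" "f \<Phi> = f \<Psi>"
    show "\<Phi> = \<Psi>"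
    proof
      fix l
      show "\<Phi> l = \<Psi> l"
      proof (cases "- M \<le> l \<and> l < Nn")
        case True
        hence "nat (l + M) < N" by (simp add: N_def)
        hence "f \<Phi> $ nat (l + M) = f \<Psi> $ nat (l + M)" using a by simp
        thus ?thesis using True \<open>nat (l + M) < N\<close> by (simp add: f_def)
      next
        case False
        show ?thesis
        proof (cases "l = Nn")
          case False
          hence "\<Phi> l = 0" "\<Psi> l = 0" using a(1,2) \<open>\<not> (- M \<le> l \<and> l < Nn)\<close>
            unfolding S_def lp_span_def by force+
          thus ?thesis by simp
        qed (use a(1,2) in \<open>simp add: S_def\<close>)
      qed
    qed
  qed
  have f4: "\<forall>\<Phi>\<in>S. P \<Phi> \<longleftrightarrow> T *\<^sub>v f \<Phi> = b"
  proof
    fix \<Phi> assume \<Phi>: "\<Phi> \<in> S"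
    have key: "(T *\<^sub>v f \<Phi>) $ p = b $ p \<longleftrightarrow> Lfun c j (mono_mult \<Phi> (- k)) = 0"
      if p: "p < N" and jk: "row_label r n m p = (j,k)" for p j k
    proof -
      have "(T *\<^sub>v f \<Phi>) $ p = (\<Sum>q<N. c (k - (int q - M)) j * \<Phi> (int q + - M))"
        using p jk T by (subst mult_vec_entry[OF T])
          (auto simp: f_def T_def Tmat_entry N_def M_def Nn_def intro!: sum.cong)
      also have "\<dots> = (\<Sum>l\<in>{-M..<Nn}. c (k - l) j * \<Phi> l)"
        using sum_shift_nat_int[OF NM, of "\<lambda>l. c (k - l) j * \<Phi> l" "- M"] by (simp add: N_def)
      finally have e1: "(T *\<^sub>v f \<Phi>) $ p = (\<Sum>l\<in>{-M..<Nn}. c (k - l) j * \<Phi> l)" .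
      have "Lfun c j (mono_mult \<Phi> (- k)) = (\<Sum>l\<in>{-M..Nn}. \<Phi> l * c (-(l + - k)) j)"
        using \<Phi> by (intro Lfun_span) (simp add: S_def)
      also have "{-M..Nn} = insert Nn {-M..<Nn}" using NM by auto
      also have "(\<Sum>l\<in>insert Nn {-M..<Nn}. \<Phi> l * c (-(l + - k)) j) =
          \<Phi> Nn * c (k - Nn) j + (\<Sum>l\<in>{-M..<Nn}. c (k - l) j * \<Phi> l)"
        by (subst sum.insert) (auto simp: mult.commute)
      finally have e2: "Lfun c j (mono_mult \<Phi> (- k)) = c (k - Nn) j + (\<Sum>l\<in>{-M..<Nn}. c (k - l) j * \<Phi> l)"
        using \<Phi> by (simp add: S_def)
      have e3: "b $ p = - c (k - Nn) j" using p jk by (simp add: b_def)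
      show ?thesis using e1 e2 e3 by (auto simp: add_eq_0_iff)
    qed
    have "T *\<^sub>v f \<Phi> = b \<longleftrightarrow> (\<forall>p<N. (T *\<^sub>v f \<Phi>) $ p = b $ p)"
      using T b by (auto intro: eq_vecI)
    also have "\<dots> \<longleftrightarrow> (\<forall>p<N. case row_label r n m p of (j,k) \<Rightarrow> Lfun c j (mono_mult \<Phi> (- k)) = 0)"
      using key by (metis (mono_tags, lifting) case_prod_conv surj_pair)
    also have "\<dots> \<longleftrightarrow> (\<forall>jk\<in>Rset r n m. case jk of (j,k) \<Rightarrow> Lfun c j (mono_mult \<Phi> (- k)) = 0)"
      unfolding N_def Nn_def M_def by (rule all_rows[OF cone])
    also have "\<dots> \<longleftrightarrow> P \<Phi>" by (auto simp: P_def Rset_def)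
    finally show "P \<Phi> \<longleftrightarrow> T *\<^sub>v f \<Phi> = b" by simp
  qed
  have "det T \<noteq> 0 \<longleftrightarrow> (\<exists>!x. x \<in> carrier_vec N \<and> T *\<^sub>v x = b)"
    by (rule det_unique_sol[OF T b])
  also have "\<dots> \<longleftrightarrow> (\<exists>!\<Phi>. \<Phi> \<in> S \<and> P \<Phi>)"
    by (rule transfer_unique[OF f1 f2 f3 f4, symmetric])
  finally show ?thesis by (simp add: T_def S_def P_def Nn_def M_def conj_assoc)
qed

lemma case_ii:
  assumes cone: "\<forall>j\<in>{1..r}. n j + m j \<ge> 0"
  shows "det (Tmat r c n m) \<noteq> 0 \<longleftrightarrow>
      (\<exists>!\<Phi>. \<Phi> \<in> lp_span (- vsum r m) (vsum r n) \<and> \<Phi> (- vsum r m) = 1 \<and>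
         (\<forall>j\<in>{1..r}. \<forall>k. - m j + 1 \<le> k \<and> k \<le> n j \<longrightarrow> Lfun c j (mono_mult \<Phi> (- k)) = 0))"
proof -
  define Nn where "Nn = vsum r n"
  define M where "M = vsum r m"
  define N where "N = nat (Nn + M)"
  define T where "T = Tmat r c n m"
  have NM: "Nn + M \<ge> 0" using N_nonneg[OF cone] by (simp add: Nn_def M_def)
  have T: "T \<in> carrier_mat N N" using Tmat_carrier by (simp add: T_def N_def Nn_def M_def)
  define S where "S = {\<Phi>. \<Phi> \<in> lp_span (- M) Nn \<and> \<Phi> (- M) = 1}"
  define P where "P = (\<lambda>\<Phi>. \<forall>j\<in>{1..r}. \<forall>k. - m j + 1 \<le> k \<and> k \<le> n j \<longrightarrow> Lfun c j (mono_mult \<Phi> (- k)) = 0)"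
  define f where "f = (\<lambda>\<Phi>::int\<Rightarrow>complex. vec N (\<lambda>q. \<Phi> (int q - M + 1)))"
  define b where "b = vec N (\<lambda>p. case row_label r n m p of (j,k) \<Rightarrow> - c (k + 1 + M) j)"
  have b: "b \<in> carrier_vec N" by (simp add: b_def)
  have f1: "\<forall>\<Phi>\<in>S. f \<Phi> \<in> carrier_vec N" by (simp add: f_def)
  have f2: "\<forall>x\<in>carrier_vec N. \<exists>\<Phi>\<in>S. f \<Phi> = x"
  proof
    fix x :: "complex vec" assume x: "x \<in> carrier_vec N"
    define \<Phi> where "\<Phi> = (\<lambda>l. if l = - M then 1 else if - M < l \<and> l \<le> Nn then x $ nat (l + M - 1) else (0::complex))"
    have "\<Phi> \<in> S" unfolding S_def lp_span_def \<Phi>_def using NM by auto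
    moreover have "f \<Phi> = x"
      using x by (intro eq_vecI) (auto simp: f_def \<Phi>_def N_def)
    ultimately show "\<exists>\<Phi>\<in>S. f \<Phi> = x" by blast
  qed
  have f3: "inj_on f S"
  proof (rule inj_onI)
    fix \<Phi> \<Psi> assume a: "\<Phi> \<in> S" "\<Psi> \<in> S" "f \<Phi> = f \<Psi>"
    show "\<Phi> = \<Psi>"
    proof
      fix l
      show "\<Phi> l = \<Psi> l"
      proof (cases "- M < l \<and> l \<le> Nn")
        case True
        hence "nat (l + M - 1) < N" by (simp add: N_def)
        hence "f \<Phi> $ nat (l + M - 1) = f \<Psi> $ nat (l + M - 1)" using a by simp
        thus ?thesis using True \<open>nat (l + M - 1) < N\<close> by (simp add: f_def)
      next
        case False
        show ?thesis
        proof (cases "l = - M")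
          case False
          hence "\<Phi> l = 0" "\<Psi> l = 0" using a(1,2) \<open>\<not> (- M < l \<and> l \<le> Nn)\<close>
            unfolding S_def lp_span_def by force+
          thus ?thesis by simp
        qed (use a(1,2) in \<open>simp add: S_def\<close>)
      qed
    qed
  qed
  have f4: "\<forall>\<Phi>\<in>S. P \<Phi> \<longleftrightarrow> T *\<^sub>v f \<Phi> = b"
  proof
    fix \<Phi> assume \<Phi>: "\<Phi> \<in> S"
    have key: "(T *\<^sub>v f \<Phi>) $ p = b $ p \<longleftrightarrow> Lfun c j (mono_mult \<Phi> (- (k + 1))) = 0"
      if p: "p < N" and jk: "row_label r n m p = (j,k)" for p j k
    proof -
      have "(T *\<^sub>v f \<Phi>) $ p = (\<Sum>q<N. c (k + 1 - (int q + (- M + 1))) j * \<Phi> (int q + (- M + 1)))"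
        using p jk T by (subst mult_vec_entry[OF T])
          (auto simp: f_def T_def Tmat_entry N_def M_def Nn_def algebra_simps intro!: sum.cong)
      also have "\<dots> = (\<Sum>l\<in>{-M+1..<-M+1+(Nn+M)}. c (k + 1 - l) j * \<Phi> l)"
        using sum_shift_nat_int[OF NM, of "\<lambda>l. c (k + 1 - l) j * \<Phi> l" "- M + 1"] by (simp add: N_def)
      finally have e1: "(T *\<^sub>v f \<Phi>) $ p = (\<Sum>l\<in>{-M+1..<-M+1+(Nn+M)}. c (k + 1 - l) j * \<Phi> l)" .
      have "Lfun c j (mono_mult \<Phi> (- (k + 1))) = (\<Sum>l\<in>{-M..Nn}. \<Phi> l * c (-(l + - (k + 1))) j)"
        using \<Phi> by (intro Lfun_span) (simp add: S_def)
      also have "{-M..Nn} = insert (- M) {-M+1..<-M+1+(Nn+M)}" using NM by auto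
      also have "(\<Sum>l\<in>insert (- M) {-M+1..<-M+1+(Nn+M)}. \<Phi> l * c (-(l + - (k + 1))) j) =
          \<Phi> (- M) * c (k + 1 + M) j + (\<Sum>l\<in>{-M+1..<-M+1+(Nn+M)}. c (k + 1 - l) j * \<Phi> l)"
      proof -
        have e: "- (- M + - (k + 1)) = k + 1 + M" "\<And>l. - (l + - (k + 1)) = k + 1 - l" "k + 1 - - M = k + 1 + M" by simp_all
        have "(\<Sum>l\<in>insert (- M) {-M+1..<-M+1+(Nn+M)}. \<Phi> l * c (-(l + - (k + 1))) j) =
           \<Phi> (- M) * c (-(- M + - (k + 1))) j + (\<Sum>l\<in>{-M+1..<-M+1+(Nn+M)}. \<Phi> l * c (-(l + - (k + 1))) j)"
          by (rule sum.insert) auto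
        thus ?thesis by (simp only: e mult.commute)
      qed
      finally have e2: "Lfun c j (mono_mult \<Phi> (- (k + 1))) = c (k + 1 + M) j + (\<Sum>l\<in>{-M+1..<-M+1+(Nn+M)}. c (k + 1 - l) j * \<Phi> l)"
        using \<Phi> by (simp add: S_def)
      have e3: "b $ p = - c (k + 1 + M) j" using p jk by (simp add: b_def)
      show ?thesis using e1 e2 e3 by (auto simp: add_eq_0_iff)
    qed
    have "T *\<^sub>v f \<Phi> = b \<longleftrightarrow> (\<forall>p<N. (T *\<^sub>v f \<Phi>) $ p = b $ p)"
      using T b by (auto intro: eq_vecI)
    also have "\<dots> \<longleftrightarrow> (\<forall>p<N. case row_label r n m p of (j,k) \<Rightarrow> Lfun c j (mono_mult \<Phi> (- (k + 1))) = 0)"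
      using key by (metis (mono_tags, lifting) case_prod_conv surj_pair)
    also have "\<dots> \<longleftrightarrow> (\<forall>jk\<in>Rset r n m. case jk of (j,k) \<Rightarrow> Lfun c j (mono_mult \<Phi> (- (k + 1))) = 0)"
      unfolding N_def Nn_def M_def by (rule all_rows[OF cone])
    also have "\<dots> \<longleftrightarrow> P \<Phi>"
    proof
      assume h: "\<forall>jk\<in>Rset r n m. case jk of (j,k) \<Rightarrow> Lfun c j (mono_mult \<Phi> (- (k + 1))) = 0"
      show "P \<Phi>" unfolding P_def
      proof (intro ballI allI impI)
        fix j k assume "j \<in> {1..r}" "- m j + 1 \<le> k \<and> k \<le> n j"
        hence "(j, k - 1) \<in> Rset r n m" by (auto simp: Rset_def)
        with h show "Lfun c j (mono_mult \<Phi> (- k)) = 0" by fastforce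
      qed
    next
      assume "P \<Phi>"
      thus "\<forall>jk\<in>Rset r n m. case jk of (j,k) \<Rightarrow> Lfun c j (mono_mult \<Phi> (- (k + 1))) = 0"
        unfolding P_def Rset_def
      proof (intro ballI)
        fix jk assume a: "jk \<in> {(j, k). 1 \<le> j \<and> j \<le> r \<and> - m j \<le> k \<and> k \<le> n j - 1}"
          and h: "\<forall>j\<in>{1..r}. \<forall>k. - m j + 1 \<le> k \<and> k \<le> n j \<longrightarrow> Lfun c j (mono_mult \<Phi> (- k)) = 0"
        obtain j k where jk: "jk = (j,k)" by fastforce
        have "j \<in> {1..r}" "- m j + 1 \<le> k + 1 \<and> k + 1 \<le> n j" using a unfolding jk by auto
        hence "Lfun c j (mono_mult \<Phi> (- (k + 1))) = 0" using h by blast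
        thus "case jk of (j, k) \<Rightarrow> Lfun c j (mono_mult \<Phi> (- (k + 1))) = 0" by (simp add: jk)
      qed
    qed
    finally show "P \<Phi> \<longleftrightarrow> T *\<^sub>v f \<Phi> = b" by simp
  qed
  have "det T \<noteq> 0 \<longleftrightarrow> (\<exists>!x. x \<in> carrier_vec N \<and> T *\<^sub>v x = b)"
    by (rule det_unique_sol[OF T b])
  also have "\<dots> \<longleftrightarrow> (\<exists>!\<Phi>. \<Phi> \<in> S \<and> P \<Phi>)"
    by (rule transfer_unique[OF f1 f2 f3 f4, symmetric])
  finally show ?thesis by (simp add: T_def S_def P_def Nn_def M_def conj_assoc)
qed

lemma Rset_Sigma: "Rset r n m = Sigma {1..r} (\<lambda>j. {- m j..n j - 1})"
  by (auto simp: Rset_def)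

lemma outside_zero:
  assumes "\<forall>j. j \<notin> {1..r} \<longrightarrow> \<Xi> j = (\<lambda>_. 0)"
    "\<forall>j\<in>{1..r}. \<Xi> j \<in> lp_span (- n j + 1 - s) (m j - s)"
    "(j, - l - s) \<notin> Rset r n m"
  shows "\<Xi> j l = 0"
proof (cases "j \<in> {1..r}")
  case True
  hence "\<not> (- n j + 1 - s \<le> l \<and> l \<le> m j - s)" using assms(3) by (auto simp: Rset_def)
  thus ?thesis using assms(2) True unfolding lp_span_def by blast
qed (use assms(1) in simp)

lemma case_xi:
  assumes cone: "\<forall>j\<in>{1..r}. n j + m j \<ge> 0"
  shows "det (Tmat r c n m) \<noteq> 0 \<longleftrightarrow>
      (\<exists>!\<Xi>. ((\<forall>j. j \<notin> {1..r} \<longrightarrow> \<Xi> j = (\<lambda>_. 0)) \<and>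
         (\<forall>j\<in>{1..r}. \<Xi> j \<in> lp_span (- n j + 1 - s) (m j - s))) \<and>
         (\<forall>q<nat (vsum r n + vsum r m).
            (\<Sum>j=1..r. Lfun c j (mono_mult (\<Xi> j) (- (vsum r m - int q - s)))) = (if q = qt then 1 else 0)))"
proof -
  define Nn where "Nn = vsum r n"
  define M where "M = vsum r m"
  define N where "N = nat (Nn + M)"
  define T where "T = Tmat r c n m"
  have NM: "Nn + M \<ge> 0" using N_nonneg[OF cone] by (simp add: Nn_def M_def)
  have T: "T \<in> carrier_mat N N" using Tmat_carrier by (simp add: T_def N_def Nn_def M_def)
  have TT: "transpose_mat T \<in> carrier_mat N N" using T by simp
  define S where "S = {\<Xi>::nat \<Rightarrow> int \<Rightarrow> complex. (\<forall>j. j \<notin> {1..r} \<longrightarrow> \<Xi> j = (\<lambda>_. 0)) \<and>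
         (\<forall>j\<in>{1..r}. \<Xi> j \<in> lp_span (- n j + 1 - s) (m j - s))}"
  define P where "P = (\<lambda>\<Xi>. \<forall>q<N.
            (\<Sum>j=1..r. Lfun c j (mono_mult (\<Xi> j) (- (M - int q - s)))) = (if q = qt then 1 else (0::complex)))"
  define f where "f = (\<lambda>\<Xi>::nat \<Rightarrow> int \<Rightarrow> complex. vec N (\<lambda>p. case row_label r n m p of (j,k) \<Rightarrow> \<Xi> j (- k - s)))"
  define b where "b = vec N (\<lambda>q. if q = qt then 1 else (0::complex))"
  have b: "b \<in> carrier_vec N" by (simp add: b_def)
  have f1: "\<forall>\<Phi>\<in>S. f \<Phi> \<in> carrier_vec N" by (simp add: f_def)
  have f2: "\<forall>x\<in>carrier_vec N. \<exists>\<Phi>\<in>S. f \<Phi> = x"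
  proof
    fix x :: "complex vec" assume x: "x \<in> carrier_vec N"
    define \<Xi> where "\<Xi> = (\<lambda>j l. if (j, - l - s) \<in> Rset r n m then x $ row_index n m (j, - l - s) else 0)"
    have "\<Xi> \<in> S" unfolding S_def lp_span_def \<Xi>_def by (auto simp: Rset_def)
    moreover have "f \<Xi> = x"
    proof (rule eq_vecI)
      fix p assume "p < dim_vec x"
      hence p: "p < N" using x by simp
      obtain j k where jk: "row_label r n m p = (j,k)" by fastforce
      have R: "(j,k) \<in> Rset r n m" "row_index n m (j,k) = p"
        using row_label_in[OF cone, of p] p jk by (auto simp: N_def Nn_def M_def)
      show "f \<Xi> $ p = x $ p" using p jk R by (simp add: f_def \<Xi>_def)
    qed (use x in \<open>simp add: f_def\<close>)
    ultimately show "\<exists>\<Phi>\<in>S. f \<Phi> = x" by blast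
  qed
  have f3: "inj_on f S"
  proof (rule inj_onI)
    fix \<Phi> \<Psi> assume a: "\<Phi> \<in> S" "\<Psi> \<in> S" "f \<Phi> = f \<Psi>"
    show "\<Phi> = \<Psi>"
    proof (intro ext)
      fix j l
      show "\<Phi> j l = \<Psi> j l"
      proof (cases "(j, - l - s) \<in> Rset r n m")
        case True
        define p where "p = row_index n m (j, - l - s)"
        have p: "p < N" "row_label r n m p = (j, - l - s)"
          using row_index_lt[OF cone True] row_label_eq[OF cone True] by (simp_all add: p_def N_def Nn_def M_def)
        have "f \<Phi> $ p = f \<Psi> $ p" using a by simp
        thus ?thesis using p by (simp add: f_def)
      next
        case False
        have "\<Phi> j l = 0" using a(1) False unfolding S_def by (blast intro: outside_zero)
        moreover have "\<Psi> j l = 0" using a(2) False unfolding S_def by (blast intro: outside_zero)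
        ultimately show ?thesis by simp
      qed
    qed
  qed
  have f4: "\<forall>\<Xi>\<in>S. P \<Xi> \<longleftrightarrow> transpose_mat T *\<^sub>v f \<Xi> = b"
  proof
    fix \<Xi> assume \<Xi>: "\<Xi> \<in> S"
    have key: "(transpose_mat T *\<^sub>v f \<Xi>) $ q = (\<Sum>j=1..r. Lfun c j (mono_mult (\<Xi> j) (- (M - int q - s))))"
      if q: "q < N" for q
    proof -
      define G where "G = (\<lambda>(j,k). c (k - (int q - M)) j * \<Xi> j (- k - s))"
      have "(transpose_mat T *\<^sub>v f \<Xi>) $ q = (\<Sum>p<N. G (row_label r n m p))"
        using q T by (subst mult_vec_entry[OF TT])
          (auto simp: f_def T_def Tmat_entry N_def M_def Nn_def G_def split: prod.splits intro!: sum.cong)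
      also have "\<dots> = (\<Sum>jk\<in>Rset r n m. G jk)"
        by (rule sum.reindex_bij_betw) (use row_bij[OF cone] in \<open>simp add: N_def Nn_def M_def\<close>)
      also have "\<dots> = (\<Sum>j=1..r. \<Sum>k\<in>{- m j..n j - 1}. G (j,k))"
        unfolding Rset_Sigma using sum.Sigma[of "{1..r}" "\<lambda>j. {- m j..n j - 1}" "\<lambda>j k. G (j,k)"] by simp
      also have "\<dots> = (\<Sum>j=1..r. Lfun c j (mono_mult (\<Xi> j) (- (M - int q - s))))"
      proof (rule sum.cong[OF refl])
        fix j assume j: "j \<in> {1..r}"
        have "Lfun c j (mono_mult (\<Xi> j) (- (M - int q - s))) =
            (\<Sum>l\<in>{- n j + 1 - s..m j - s}. \<Xi> j l * c (- (l + - (M - int q - s))) j)"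
          using \<Xi> j by (intro Lfun_span) (simp add: S_def)
        also have "\<dots> = (\<Sum>k\<in>{- m j..n j - 1}. G (j,k))"
          by (rule sum.reindex_bij_witness[where i = "\<lambda>k. - k - s" and j = "\<lambda>l. - l - s"])
            (auto simp: G_def algebra_simps)
        finally show "(\<Sum>k\<in>{- m j..n j - 1}. G (j,k)) = Lfun c j (mono_mult (\<Xi> j) (- (M - int q - s)))" by simp
      qed
      finally show ?thesis .
    qed
    have "transpose_mat T *\<^sub>v f \<Xi> = b \<longleftrightarrow> (\<forall>q<N. (transpose_mat T *\<^sub>v f \<Xi>) $ q = b $ q)"
      using TT b by (auto intro: eq_vecI)
    also have "\<dots> \<longleftrightarrow> P \<Xi>" using key by (simp add: P_def b_def)
    finally show "P \<Xi> \<longleftrightarrow> transpose_mat T *\<^sub>v f \<Xi> = b" by simp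
  qed
  have "det T = det (transpose_mat T)" using det_transpose[OF T] by simp
  hence "det T \<noteq> 0 \<longleftrightarrow> (\<exists>!x. x \<in> carrier_vec N \<and> transpose_mat T *\<^sub>v x = b)"
    using det_unique_sol[OF TT b] by simp
  also have "\<dots> \<longleftrightarrow> (\<exists>!\<Phi>. \<Phi> \<in> S \<and> P \<Phi>)"
    by (rule transfer_unique[OF f1 f2 f3 f4, symmetric])
  finally show ?thesis by (simp add: T_def S_def P_def Nn_def M_def N_def)
qed

lemma N_pos:
  assumes cone: "\<forall>j\<in>{1..r}. n j + m j \<ge> 0"
    and nontriv: "\<not> (\<forall>j\<in>{1..r}. n j = - m j)"
  shows "vsum r n + vsum r m \<ge> 1"
proof -
  obtain j where j: "j \<in> {1..r}" "n j \<noteq> - m j" using nontriv by blast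
  have "row_offset n m j \<ge> 0" using off_mono[OF cone, of 1 j] j off_1[of n m] by auto
  moreover have "row_offset n m (Suc j) \<le> row_offset n m (Suc r)"
    using j by (intro off_mono[OF cone]) auto
  moreover have "row_offset n m (Suc j) = row_offset n m j + n j + m j"
    using j by (intro off_Suc) auto
  moreover have "n j + m j > 0" using j cone by force
  ultimately show ?thesis using off_total[of n m r] by linarith
qed

lemma conv_iii:
  fixes E :: "int \<Rightarrow> complex"
  assumes "Nn + M \<ge> 1"
  shows "(\<forall>q<nat (Nn + M). E (- (M - int q - 1)) = (if q = nat (Nn + M) - 1 then 1 else 0)) \<longleftrightarrow>
         ((\<forall>k. - Nn + 1 \<le> k \<and> k \<le> M - 1 \<longrightarrow> E (- k) = 0) \<and> E Nn = 1)"
proof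
  assume h: "\<forall>q<nat (Nn + M). E (- (M - int q - 1)) = (if q = nat (Nn + M) - 1 then 1 else 0)"
  show "(\<forall>k. - Nn + 1 \<le> k \<and> k \<le> M - 1 \<longrightarrow> E (- k) = 0) \<and> E Nn = 1"
  proof (intro conjI allI impI)
    fix k assume k: "- Nn + 1 \<le> k \<and> k \<le> M - 1"
    have "nat (M - 1 - k) < nat (Nn + M)" "nat (M - 1 - k) \<noteq> nat (Nn + M) - 1" using k assms by auto
    hence "E (- (M - int (nat (M - 1 - k)) - 1)) = 0" using h[rule_format, of "nat (M - 1 - k)"] by simp
    moreover have "- (M - int (nat (M - 1 - k)) - 1) = - k" using k by simp
    ultimately show "E (- k) = 0" by simp
  next
    have "nat (Nn + M) - 1 < nat (Nn + M)" using assms by auto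
    hence "E (- (M - int (nat (Nn + M) - 1) - 1)) = 1" using h[rule_format, of "nat (Nn + M) - 1"] by simp
    moreover have "- (M - int (nat (Nn + M) - 1) - 1) = Nn" using assms by auto
    ultimately show "E Nn = 1" by simp
  qed
next
  assume h: "(\<forall>k. - Nn + 1 \<le> k \<and> k \<le> M - 1 \<longrightarrow> E (- k) = 0) \<and> E Nn = 1"
  show "\<forall>q<nat (Nn + M). E (- (M - int q - 1)) = (if q = nat (Nn + M) - 1 then 1 else 0)"
  proof (intro allI impI)
    fix q assume q: "q < nat (Nn + M)"
    show "E (- (M - int q - 1)) = (if q = nat (Nn + M) - 1 then 1 else 0)"
    proof (cases "q = nat (Nn + M) - 1")
      case True
      hence "- (M - int q - 1) = Nn" using assms by auto
      thus ?thesis using h True by simp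
    next
      case False
      hence "- Nn + 1 \<le> M - int q - 1 \<and> M - int q - 1 \<le> M - 1" using q assms by auto
      hence "E (- (M - int q - 1)) = 0" using h by blast
      thus ?thesis using False by simp
    qed
  qed
qed

lemma conv_iv:
  fixes E :: "int \<Rightarrow> complex"
  assumes "Nn + M \<ge> 1"
  shows "(\<forall>q<nat (Nn + M). E (- (M - int q - 0)) = (if q = 0 then 1 else 0)) \<longleftrightarrow>
         ((\<forall>k. - Nn + 1 \<le> k \<and> k \<le> M - 1 \<longrightarrow> E (- k) = 0) \<and> E (- M) = 1)"
proof
  assume h: "\<forall>q<nat (Nn + M). E (- (M - int q - 0)) = (if q = 0 then 1 else 0)"
  show "(\<forall>k. - Nn + 1 \<le> k \<and> k \<le> M - 1 \<longrightarrow> E (- k) = 0) \<and> E (- M) = 1"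
  proof (intro conjI allI impI)
    fix k assume k: "- Nn + 1 \<le> k \<and> k \<le> M - 1"
    have "nat (M - k) < nat (Nn + M)" "nat (M - k) \<noteq> 0" using k assms by auto
    hence "E (- (M - int (nat (M - k)) - 0)) = 0" using h[rule_format, of "nat (M - k)"] by simp
    moreover have "- (M - int (nat (M - k)) - 0) = - k" using k by simp
    ultimately show "E (- k) = 0" by simp
  next
    have "0 < nat (Nn + M)" using assms by auto
    thus "E (- M) = 1" using h[rule_format, of 0] by simp
  qed
next
  assume h: "(\<forall>k. - Nn + 1 \<le> k \<and> k \<le> M - 1 \<longrightarrow> E (- k) = 0) \<and> E (- M) = 1"
  show "\<forall>q<nat (Nn + M). E (- (M - int q - 0)) = (if q = 0 then 1 else 0)"
  proof (intro allI impI)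
    fix q assume q: "q < nat (Nn + M)"
    show "E (- (M - int q - 0)) = (if q = 0 then 1 else 0)"
    proof (cases "q = 0")
      case True
      thus ?thesis using h by simp
    next
      case False
      hence "- Nn + 1 \<le> M - int q \<and> M - int q \<le> M - 1" using q assms by auto
      hence "E (- (M - int q)) = 0" using h by blast
      thus ?thesis using False by simp
    qed
  qed
qed

lemma part3:
  assumes cone: "\<forall>j\<in>{1..r}. n j + m j \<ge> 0"
    and nontriv: "\<not> (\<forall>j\<in>{1..r}. n j = - m j)"
  shows "det (Tmat r c n m) \<noteq> 0 \<longleftrightarrow>
      (\<exists>!\<Xi>. (\<forall>j. j \<notin> {1..r} \<longrightarrow> \<Xi> j = (\<lambda>_. 0)) \<and>
         (\<forall>j\<in>{1..r}. \<Xi> j \<in> lp_span (- n j) (m j - 1)) \<and>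
         (\<forall>k. - vsum r n + 1 \<le> k \<and> k \<le> vsum r m - 1 \<longrightarrow>
              (\<Sum>j=1..r. Lfun c j (mono_mult (\<Xi> j) (- k))) = 0) \<and>
         (\<Sum>j=1..r. Lfun c j (mono_mult (\<Xi> j) (vsum r n))) = 1)"
proof -
  have N1: "vsum r n + vsum r m \<ge> 1" by (rule N_pos[OF cone nontriv])
    have e: "(\<forall>q<nat (vsum r n + vsum r m).
            (\<Sum>j=1..r. Lfun c j (mono_mult (\<Xi> j) (- (vsum r m - int q - 1)))) =
               (if q = nat (vsum r n + vsum r m) - 1 then 1 else 0)) \<longleftrightarrow>
         ((\<forall>k. - vsum r n + 1 \<le> k \<and> k \<le> vsum r m - 1 \<longrightarrow>
              (\<Sum>j=1..r. Lfun c j (mono_mult (\<Xi> j) (- k))) = 0) \<and>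
         (\<Sum>j=1..r. Lfun c j (mono_mult (\<Xi> j) (vsum r n))) = 1)" for \<Xi>
      using conv_iii[OF N1, of "\<lambda>e. \<Sum>j=1..r. Lfun c j (mono_mult (\<Xi> j) e)"] by simp
    show ?thesis
      using case_xi[OF cone, where s = 1 and c = c and qt = "nat (vsum r n + vsum r m) - 1"] unfolding e
      by (simp add: conj_assoc)
  qed

lemma part4:
  assumes cone: "\<forall>j\<in>{1..r}. n j + m j \<ge> 0"
    and nontriv: "\<not> (\<forall>j\<in>{1..r}. n j = - m j)"
  shows "det (Tmat r c n m) \<noteq> 0 \<longleftrightarrow>
      (\<exists>!\<Xi>. (\<forall>j. j \<notin> {1..r} \<longrightarrow> \<Xi> j = (\<lambda>_. 0)) \<and>
         (\<forall>j\<in>{1..r}. \<Xi> j \<in> lp_span (- n j + 1) (m j)) \<and>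
         (\<forall>k. - vsum r n + 1 \<le> k \<and> k \<le> vsum r m - 1 \<longrightarrow>
              (\<Sum>j=1..r. Lfun c j (mono_mult (\<Xi> j) (- k))) = 0) \<and>
         (\<Sum>j=1..r. Lfun c j (mono_mult (\<Xi> j) (- vsum r m))) = 1)"
proof -
  have N1: "vsum r n + vsum r m \<ge> 1" by (rule N_pos[OF cone nontriv])
    have e: "(\<forall>q<nat (vsum r n + vsum r m).
            (\<Sum>j=1..r. Lfun c j (mono_mult (\<Xi> j) (- (vsum r m - int q - 0)))) =
               (if q = 0 then 1 else 0)) \<longleftrightarrow>
         ((\<forall>k. - vsum r n + 1 \<le> k \<and> k \<le> vsum r m - 1 \<longrightarrow>
              (\<Sum>j=1..r. Lfun c j (mono_mult (\<Xi> j) (- k))) = 0) \<and>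
         (\<Sum>j=1..r. Lfun c j (mono_mult (\<Xi> j) (- vsum r m))) = 1)" for \<Xi>
      using conv_iv[OF N1, of "\<lambda>e. \<Sum>j=1..r. Lfun c j (mono_mult (\<Xi> j) e)"] by simp
    show ?thesis
      using case_xi[OF cone, where s = 0 and c = c and qt = 0] unfolding e
      by (simp add: conj_assoc)
  qed

theorem proposition2p1:
  fixes r :: nat and c :: "int \<Rightarrow> nat \<Rightarrow> complex" and n m :: "nat \<Rightarrow> int"
  assumes r: "r \<ge> 1"
    and cone: "\<forall>j\<in>{1..r}. n j + m j \<ge> 0"
    and nontriv: "\<not> (\<forall>j\<in>{1..r}. n j = - m j)"
  shows
   "(det (Tmat r c n m) \<noteq> 0 \<longleftrightarrow>
      (\<exists>!\<Phi>. \<Phi> \<in> lp_span (- vsum r m) (vsum r n) \<and> \<Phi> (vsum r n) = 1 \<and>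
         (\<forall>j\<in>{1..r}. \<forall>k. - m j \<le> k \<and> k \<le> n j - 1 \<longrightarrow> Lfun c j (mono_mult \<Phi> (- k)) = 0)))
  \<and> (det (Tmat r c n m) \<noteq> 0 \<longleftrightarrow>
      (\<exists>!\<Phi>. \<Phi> \<in> lp_span (- vsum r m) (vsum r n) \<and> \<Phi> (- vsum r m) = 1 \<and>
         (\<forall>j\<in>{1..r}. \<forall>k. - m j + 1 \<le> k \<and> k \<le> n j \<longrightarrow> Lfun c j (mono_mult \<Phi> (- k)) = 0)))
  \<and> (det (Tmat r c n m) \<noteq> 0 \<longleftrightarrow>
      (\<exists>!\<Xi>. (\<forall>j. j \<notin> {1..r} \<longrightarrow> \<Xi> j = (\<lambda>_. 0)) \<and>
         (\<forall>j\<in>{1..r}. \<Xi> j \<in> lp_span (- n j) (m j - 1)) \<and>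
         (\<forall>k. - vsum r n + 1 \<le> k \<and> k \<le> vsum r m - 1 \<longrightarrow>
              (\<Sum>j=1..r. Lfun c j (mono_mult (\<Xi> j) (- k))) = 0) \<and>
         (\<Sum>j=1..r. Lfun c j (mono_mult (\<Xi> j) (vsum r n))) = 1))
  \<and> (det (Tmat r c n m) \<noteq> 0 \<longleftrightarrow>
      (\<exists>!\<Xi>. (\<forall>j. j \<notin> {1..r} \<longrightarrow> \<Xi> j = (\<lambda>_. 0)) \<and>
         (\<forall>j\<in>{1..r}. \<Xi> j \<in> lp_span (- n j + 1) (m j)) \<and>
         (\<forall>k. - vsum r n + 1 \<le> k \<and> k \<le> vsum r m - 1 \<longrightarrow>
              (\<Sum>j=1..r. Lfun c j (mono_mult (\<Xi> j) (- k))) = 0) \<and>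
         (\<Sum>j=1..r. Lfun c j (mono_mult (\<Xi> j) (- vsum r m))) = 1))"
  by (intro conjI case_i[OF cone] case_ii[OF cone] part3[OF cone nontriv] part4[OF cone nontriv])

end
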